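(* Let $D$ be a discrete semigroup such that for some $c\in D$ the set $D_c=\{(x,y)\in D\times D:xy=c\}$ is infinite, and let $\pi:D\to M$ be a homomorphism into a Hausdorff topological semigroup $M$. If $S=D\cup_\pi M$ is a topological semigroup, then $D_c$ is an open-and-closed discrete subspace of $S\times S$, and consequently $S\times S$ is not pseudocompact.
   Context: For a discrete space $D$: if $D$ is infinite, $\alpha D=D\cup\{\infty\}$ is its one-point compactification; if $D$ is finite, $\alpha D$ is the topological sum of $D$ and an isolated point $\infty\notin D$. For a map $\pi:D\to M$, $D\cup_\pi M$ is the subspace $\{(x,\pi(x)):x\in D\}\cup(\{\infty\}\times M)$ of $\alpha D\times M$, with $D$ identified with $\{(x,\pi(x))\}$ and $M$ with $\{\infty\}\times M$. It carries the semigroup operation extending those of $D$ and $M$ by $xy=\pi(x)y$ for $x\in D,y\in M$ and $xy=x\pi(y)$ for $x\in M,y\in D$. A space is pseudocompact if every locally finite open cover is finite. *)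

theory Defs
  imports "HOL-Analysis.Analysis"
begin

text \<open>The space alpha D for a discrete space D (a set of type 'd), realised on 'd option,
  where None plays the role of the point infinity and Some x the point x of D.\<close>

definition alpha_open :: "'d set \<Rightarrow> 'd option set \<Rightarrow> bool" where
  "alpha_open D U \<longleftrightarrow> U \<subseteq> insert None (Some ` D) \<and> (None \<in> U \<longrightarrow> finite (Some ` D - U))"

lemma istopology_alpha_open: "istopology (alpha_open D)"
  unfolding istopology_def alpha_open_def
proof (rule conjI; (intro allI impI)?)
  fix S T assume a: "S \<subseteq> insert None (Some ` D) \<and> (None \<in> S \<longrightarrow> finite (Some ` D - S))"
    "T \<subseteq> insert None (Some ` D) \<and> (None \<in> T \<longrightarrow> finite (Some ` D - T))"
  show "S \<inter> T \<subseteq> insert None (Some ` D) \<and> (None \<in> S \<inter> T \<longrightarrow> finite (Some ` D - S \<inter> T))"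
  proof (intro conjI impI)
    show "S \<inter> T \<subseteq> insert None (Some ` D)" using a by blast
  next
    assume "None \<in> S \<inter> T"
    then have "finite ((Some ` D - S) \<union> (Some ` D - T))" using a by auto
    moreover have "Some ` D - S \<inter> T = (Some ` D - S) \<union> (Some ` D - T)" by blast
    ultimately show "finite (Some ` D - S \<inter> T)" by simp
  qed
next
  fix K assume a: "\<forall>S\<in>K. S \<subseteq> insert None (Some ` D) \<and> (None \<in> S \<longrightarrow> finite (Some ` D - S))"
  show "\<Union> K \<subseteq> insert None (Some ` D) \<and> (None \<in> \<Union> K \<longrightarrow> finite (Some ` D - \<Union> K))"
  proof (intro conjI impI)
    show "\<Union> K \<subseteq> insert None (Some ` D)" using a by blast
  next
    assume "None \<in> \<Union> K"
    then obtain S where "S \<in> K" "None \<in> S" by blast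
    then have "finite (Some ` D - S)" using a by blast
    moreover have "Some ` D - \<Union> K \<subseteq> Some ` D - S" using \<open>S \<in> K\<close> by blast
    ultimately show "finite (Some ` D - \<Union> K)" by (rule finite_subset[rotated])
  qed
qed

text \<open>alpha D: one-point compactification of the discrete space D if D is infinite,
  the topological sum of the discrete D and an isolated point if D is finite.\<close>
definition alphaD :: "'d set \<Rightarrow> 'd option topology" where
  "alphaD D = (if infinite D then topology (alpha_open D)
               else discrete_topology (insert None (Some ` D)))"

text \<open>Carrier of the space D \<union>_pi M inside alpha D \<times> M.\<close>
definition glued_carrier :: "'d set \<Rightarrow> ('d \<Rightarrow> 'm) \<Rightarrow> 'm topology \<Rightarrow> ('d option \<times> 'm) set" where
  "glued_carrier D \<pi> M = {(Some x, \<pi> x) | x. x \<in> D} \<union> ({None} \<times> topspace M)"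

definition glued_topology :: "'d set \<Rightarrow> ('d \<Rightarrow> 'm) \<Rightarrow> 'm topology \<Rightarrow> ('d option \<times> 'm) topology" where
  "glued_topology D \<pi> M = subtopology (prod_topology (alphaD D) M) (glued_carrier D \<pi> M)"

fun glued_mult :: "('d \<Rightarrow> 'd \<Rightarrow> 'd) \<Rightarrow> ('m \<Rightarrow> 'm \<Rightarrow> 'm) \<Rightarrow> ('d \<Rightarrow> 'm)
     \<Rightarrow> ('d option \<times> 'm) \<Rightarrow> ('d option \<times> 'm) \<Rightarrow> ('d option \<times> 'm)" where
  "glued_mult mD mM \<pi> (Some x, _) (Some y, _) = (Some (mD x y), \<pi> (mD x y))"
| "glued_mult mD mM \<pi> (Some x, _) (None, q) = (None, mM (\<pi> x) q)"
| "glued_mult mD mM \<pi> (None, p) (Some y, _) = (None, mM p (\<pi> y))"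
| "glued_mult mD mM \<pi> (None, p) (None, q) = (None, mM p q)"

definition pseudocompact_space :: "'a topology \<Rightarrow> bool" where
  "pseudocompact_space X \<longleftrightarrow>
     (\<forall>\<U>. (\<forall>U\<in>\<U>. openin X U) \<and> \<Union>\<U> = topspace X \<and> locally_finite_in X \<U> \<longrightarrow> finite \<U>)"

end

theory Submission
  imports Defs
begin

lemma topspace_alphaD: "topspace (alphaD D) = insert None (Some ` D)"
proof (cases "infinite D")
  case True
  have "alpha_open D (insert None (Some ` D))" by (auto simp: alpha_open_def)
  moreover have "\<And>U. alpha_open D U \<Longrightarrow> U \<subseteq> insert None (Some ` D)" by (auto simp: alpha_open_def)
  ultimately show ?thesis using True
    by (auto simp: alphaD_def topspace_def istopology_alpha_open)
qed (auto simp: alphaD_def)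

lemma alphaD_single:
  assumes "x \<in> D"
  shows "openin (alphaD D) {Some x}" "closedin (alphaD D) {Some x}"
proof -
  show "openin (alphaD D) {Some x}"
    using assms by (auto simp: alphaD_def istopology_alpha_open alpha_open_def)
  have "openin (alphaD D) (insert None (Some ` D) - {Some x})"
  proof (cases "infinite D")
    case True
    have "Some ` D - (insert None (Some ` D) - {Some x}) \<subseteq> {Some x}" by auto
    hence "finite (Some ` D - (insert None (Some ` D) - {Some x}))" using finite_subset by blast
    then show ?thesis using True by (auto simp: alphaD_def istopology_alpha_open alpha_open_def)
  qed (auto simp: alphaD_def)
  then show "closedin (alphaD D) {Some x}"
    using assms by (auto simp: closedin_def topspace_alphaD)
qed

lemma topspace_glued: "topspace (glued_topology D \<pi> M) = glued_carrier D \<pi> M"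
  if "\<And>x. x \<in> D \<Longrightarrow> \<pi> x \<in> topspace M"
  using that by (auto simp: glued_topology_def glued_carrier_def topspace_alphaD)

lemma glued_single:
  assumes "x \<in> D" "\<And>x. x \<in> D \<Longrightarrow> \<pi> x \<in> topspace M"
  shows "openin (glued_topology D \<pi> M) {(Some x, \<pi> x)}"
    "closedin (glued_topology D \<pi> M) {(Some x, \<pi> x)}"
proof -
  have e: "{(Some x, \<pi> x)} = ({Some x} \<times> topspace M) \<inter> glued_carrier D \<pi> M"
    using assms by (auto simp: glued_carrier_def)
  have "openin (prod_topology (alphaD D) M) ({Some x} \<times> topspace M)"
    using alphaD_single[OF assms(1)] by (simp add: openin_prod_Times_iff)
  then show "openin (glued_topology D \<pi> M) {(Some x, \<pi> x)}"
    unfolding glued_topology_def openin_subtopology using e by blast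
  have "closedin (prod_topology (alphaD D) M) ({Some x} \<times> topspace M)"
    using alphaD_single[OF assms(1)] by (simp add: closedin_prod_Times_iff)
  then show "closedin (glued_topology D \<pi> M) {(Some x, \<pi> x)}"
    unfolding glued_topology_def closedin_subtopology using e by blast
qed

theorem corollary3p3:
  fixes D :: "'d set" and mD :: "'d \<Rightarrow> 'd \<Rightarrow> 'd" and c :: 'd
    and M :: "'m topology" and mM :: "'m \<Rightarrow> 'm \<Rightarrow> 'm" and \<pi> :: "'d \<Rightarrow> 'm"
  assumes D_closed: "\<And>x y. x \<in> D \<Longrightarrow> y \<in> D \<Longrightarrow> mD x y \<in> D"
    and D_assoc: "\<And>x y z. x \<in> D \<Longrightarrow> y \<in> D \<Longrightarrow> z \<in> D \<Longrightarrow> mD (mD x y) z = mD x (mD y z)"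
    and c_in: "c \<in> D"
    and Dc_inf: "infinite {(x, y). x \<in> D \<and> y \<in> D \<and> mD x y = c}"
    and M_Hausdorff: "Hausdorff_space M"
    and M_closed: "\<And>p q. p \<in> topspace M \<Longrightarrow> q \<in> topspace M \<Longrightarrow> mM p q \<in> topspace M"
    and M_assoc: "\<And>p q r. p \<in> topspace M \<Longrightarrow> q \<in> topspace M \<Longrightarrow> r \<in> topspace M \<Longrightarrow>
                    mM (mM p q) r = mM p (mM q r)"
    and M_cont: "continuous_map (prod_topology M M) M (\<lambda>(p, q). mM p q)"
    and \<pi>_maps: "\<And>x. x \<in> D \<Longrightarrow> \<pi> x \<in> topspace M"
    and \<pi>_hom: "\<And>x y. x \<in> D \<Longrightarrow> y \<in> D \<Longrightarrow> \<pi> (mD x y) = mM (\<pi> x) (\<pi> y)"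
    and S_topsg: "continuous_map (prod_topology (glued_topology D \<pi> M) (glued_topology D \<pi> M))
                    (glued_topology D \<pi> M) (\<lambda>(s, t). glued_mult mD mM \<pi> s t)"
  shows "(let S = glued_topology D \<pi> M;
              Dc = {((Some x, \<pi> x), (Some y, \<pi> y)) | x y. x \<in> D \<and> y \<in> D \<and> mD x y = c}
          in openin (prod_topology S S) Dc \<and> closedin (prod_topology S S) Dc
             \<and> subtopology (prod_topology S S) Dc = discrete_topology Dc
             \<and> \<not> pseudocompact_space (prod_topology S S))"
proof -
  define S where "S = glued_topology D \<pi> M"
  define Dc where "Dc = {((Some x, \<pi> x), (Some y, \<pi> y)) | x y. x \<in> D \<and> y \<in> D \<and> mD x y = c}"
  define X where "X = prod_topology S S"
  have tS: "topspace S = glued_carrier D \<pi> M" unfolding S_def using topspace_glued \<pi>_maps by blast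
  have tX: "topspace X = glued_carrier D \<pi> M \<times> glued_carrier D \<pi> M"
    unfolding X_def by (simp add: tS)
  have Dc_sub: "Dc \<subseteq> topspace X" unfolding tX Dc_def glued_carrier_def by auto
  have single: "openin X {p}" if pD: "p \<in> Dc" for p
  proof -
    obtain x y where p: "p = ((Some x, \<pi> x), (Some y, \<pi> y))" "x \<in> D" "y \<in> D"
      using pD unfolding Dc_def by blast
    have e: "{p} = {(Some x, \<pi> x)} \<times> {(Some y, \<pi> y)}" using p by auto
    have "openin X ({(Some x, \<pi> x)} \<times> {(Some y, \<pi> y)})" unfolding X_def S_def
      unfolding openin_prod_Times_iff
      using glued_single(1)[of x D \<pi> M, OF p(2) \<pi>_maps] glued_single(1)[of y D \<pi> M, OF p(3) \<pi>_maps]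
      by (intro disjI2 conjI)
    then show ?thesis using e by simp
  qed
  have op: "openin X Dc"
    using single by (subst openin_subopen) blast
  have cl_pt: "closedin S {(Some c, \<pi> c)}" unfolding S_def using glued_single(2)[of c D \<pi> M] c_in \<pi>_maps by blast
  have pre: "Dc = {z \<in> topspace X. (\<lambda>(s, t). glued_mult mD mM \<pi> s t) z \<in> {(Some c, \<pi> c)}}"
  proof (rule set_eqI, rule iffI)
    fix z assume "z \<in> Dc"
    then show "z \<in> {z \<in> topspace X. (\<lambda>(s, t). glued_mult mD mM \<pi> s t) z \<in> {(Some c, \<pi> c)}}"
      using Dc_sub unfolding Dc_def by auto
  next
    fix z assume z: "z \<in> {z \<in> topspace X. (\<lambda>(s, t). glued_mult mD mM \<pi> s t) z \<in> {(Some c, \<pi> c)}}"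
    then obtain a b a' b' where zz: "z = ((a, b), (a', b'))" by (metis prod.exhaust)
    have m: "(a, b) \<in> glued_carrier D \<pi> M" "(a', b') \<in> glued_carrier D \<pi> M" using z zz tX by auto
    show "z \<in> Dc"
    proof (cases a)
      case None then show ?thesis using z zz by (cases a') auto
    next
      case (Some x)
      show ?thesis
      proof (cases a')
        case None then show ?thesis using z zz Some by auto
      next
        case (Some y)
        have "x \<in> D" "b = \<pi> x" using m(1) \<open>a = Some x\<close> by (auto simp: glued_carrier_def)
        moreover have "y \<in> D" "b' = \<pi> y" using m(2) Some by (auto simp: glued_carrier_def)
        ultimately show ?thesis using z zz Some \<open>a = Some x\<close> unfolding Dc_def by auto
      qed
    qed
  qed
  have cl: "closedin X Dc"
    apply (subst pre)
    apply (rule closedin_continuous_map_preimage[OF _ cl_pt])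
    using S_topsg unfolding X_def S_def by simp
  have disc: "subtopology X Dc = discrete_topology Dc"
    unfolding eq_commute[of "subtopology X Dc"] discrete_topology_unique
  proof (intro conjI ballI)
    show "topspace (subtopology X Dc) = Dc" using Dc_sub by auto
    fix p assume "p \<in> Dc"
    then show "openin (subtopology X Dc) {p}"
      unfolding openin_subtopology using single by blast
  qed
  have inf: "infinite Dc"
  proof
    assume "finite Dc"
    have "Dc = (\<lambda>(x, y). ((Some x, \<pi> x), (Some y, \<pi> y))) ` {(x, y). x \<in> D \<and> y \<in> D \<and> mD x y = c}"
      unfolding Dc_def by auto
    moreover have "inj (\<lambda>(x, y). ((Some x, \<pi> x), (Some y, \<pi> y)))"
      by (auto simp: inj_def)
    ultimately have "finite {(x, y). x \<in> D \<and> y \<in> D \<and> mD x y = c}"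
      using \<open>finite Dc\<close> finite_imageD[of "\<lambda>(x, y). ((Some x, \<pi> x), (Some y, \<pi> y))"]
      by (simp add: inj_on_subset[of _ UNIV])
    then show False using Dc_inf by simp
  qed
  have npc: "\<not> pseudocompact_space X"
  proof
    assume pc: "pseudocompact_space X"
    define U where "U = insert (topspace X - Dc) ((\<lambda>p. {p}) ` Dc)"
    have u1: "\<forall>V\<in>U. openin X V" unfolding U_def using single cl by auto
    have u2: "\<Union>U = topspace X" unfolding U_def using Dc_sub by auto
    have u3: "locally_finite_in X U"
      unfolding locally_finite_in_def
    proof (intro conjI ballI)
      show "\<Union>U \<subseteq> topspace X" unfolding U_def using Dc_sub by auto
      fix x assume x: "x \<in> topspace X"
      show "\<exists>V. openin X V \<and> x \<in> V \<and> finite {W \<in> U. W \<inter> V \<noteq> {}}"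
      proof (cases "x \<in> Dc")
        case True
        have "{W \<in> U. W \<inter> {x} \<noteq> {}} \<subseteq> {{x}}" unfolding U_def using True by auto
        then show ?thesis using single[OF True] finite_subset by blast
      next
        case False
        have "{W \<in> U. W \<inter> (topspace X - Dc) \<noteq> {}} \<subseteq> {topspace X - Dc}" unfolding U_def by auto
        moreover have "openin X (topspace X - Dc)" using cl by auto
        ultimately show ?thesis using False x finite_subset by blast
      qed
    qed
    have "finite U" using pc u1 u2 u3 unfolding pseudocompact_space_def by simp
    hence "finite ((\<lambda>p. {p}) ` Dc)" unfolding U_def by simp
    hence "finite Dc" by (rule finite_imageD) (auto simp: inj_on_def)
    then show False using inf by simp
  qed
  show ?thesis
    unfolding Let_def S_def[symmetric] Dc_def[symmetric] X_def[symmetric]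
    using op cl disc npc by blast
qed

end
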